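(* Let $q\ge2$, let $\mathcal{D}$ be a $2k$-wise uniform distribution over $(\mathbb{Z}/q\mathbb{Z})^n$, and let $\eta\in[0,1]$. Then for every length-$n$ width-$w$ standard-order read-once branching program $f:(\mathbb{Z}/q\mathbb{Z})^n\to\{0,1\}$, $$\left|\mathbb{E}_{x\sim\mathcal{D}}(T_\eta f)(x)-\mathbb{E}_{x\gets(\mathbb{Z}/q\mathbb{Z})^n}f(x)\right|\le nw(1-\eta)^k,$$ where the second expectation is over uniform $x$. Equivalently, if $x\sim\mathcal{D}$ and $y\gets\mathrm{SC}_\eta(x)$, then $y$ is $nw(1-\eta)^k$-pseudorandom to every such $f$.
   Context: A distribution on $(\mathbb{Z}/q\mathbb{Z})^n$ is $t$-wise uniform if its marginal on any $t$ coordinates is uniform. $\mathrm{SC}_\eta(x)$ independently keeps each coordinate of $x$ with probability $1-\eta$ and replaces it with a uniform element of $\mathbb{Z}/q\mathbb{Z}$ with probability $\eta$; the noise operator is $(T_\eta f)(x)=\mathbb{E}[f(\mathrm{SC}_\eta(x))]$. A length-$n$ width-$w$ standard-order read-once branching program consists of layers $V_0,\dots,V_n$ each with at most $w$ vertices, a start vertex in $V_0$, a set of accepting vertices in $V_n$, and for each vertex of $V_{i-1}$ and each symbol $a\in\mathbb{Z}/q\mathbb{Z}$ an edge labeled $a$ to a vertex of $V_i$; on input $x$ one follows from the start the edges labeled $x_1,\dots,x_n$, and $f(x)=1$ iff the final vertex is accepting. *)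

theory Defs
  imports "HOL-Probability.Probability"
begin

text \<open>(Z/qZ)^n is represented as lists of length n with entries in {0..<q}.\<close>
definition cube :: "nat \<Rightarrow> nat \<Rightarrow> nat list set" where
  "cube q n = {xs. length xs = n \<and> set xs \<subseteq> {..<q}}"

definition t_wise_uniform :: "nat \<Rightarrow> nat \<Rightarrow> nat \<Rightarrow> nat list pmf \<Rightarrow> bool" where
  "t_wise_uniform q n t D \<longleftrightarrow>
     set_pmf D \<subseteq> cube q n \<and>
     (\<forall>S a. S \<subseteq> {..<n} \<and> card S \<le> t \<and> (\<forall>i\<in>S. a i < q) \<longrightarrow>
        measure_pmf.prob D {x. \<forall>i\<in>S. x ! i = a i} = 1 / real q ^ card S)"

text \<open>Probability that SC_eta maps x to y: each coordinate independently kept with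
  probability 1-eta, replaced by a uniform symbol with probability eta.\<close>
definition sc_prob :: "nat \<Rightarrow> real \<Rightarrow> nat list \<Rightarrow> nat list \<Rightarrow> real" where
  "sc_prob q \<eta> x y = (\<Prod>i<length x. (1 - \<eta>) * (if x ! i = y ! i then 1 else 0) + \<eta> / real q)"

definition noise_op :: "nat \<Rightarrow> nat \<Rightarrow> real \<Rightarrow> (nat list \<Rightarrow> real) \<Rightarrow> nat list \<Rightarrow> real" where
  "noise_op q n \<eta> f x = (\<Sum>y\<in>cube q n. sc_prob q \<eta> x y * f y)"

text \<open>Read-once branching program in standard order: layers V 0, ..., V n (vertex sets),
  start vertex, accepting set, and transition  trans i v a  for the edge labelled a
  from vertex v of layer i to layer i+1 (reading coordinate i, 0-based).\<close>
definition is_robp ::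
  "nat \<Rightarrow> nat \<Rightarrow> nat \<Rightarrow> (nat \<Rightarrow> 'v set) \<Rightarrow> 'v \<Rightarrow> 'v set \<Rightarrow> (nat \<Rightarrow> 'v \<Rightarrow> nat \<Rightarrow> 'v) \<Rightarrow> bool" where
  "is_robp q n w V s Acc tr \<longleftrightarrow>
     (\<forall>i\<le>n. finite (V i) \<and> card (V i) \<le> w) \<and> s \<in> V 0 \<and> Acc \<subseteq> V n \<and>
     (\<forall>i<n. \<forall>v\<in>V i. \<forall>a<q. tr i v a \<in> V (Suc i))"

fun rob_run :: "(nat \<Rightarrow> 'v \<Rightarrow> nat \<Rightarrow> 'v) \<Rightarrow> nat \<Rightarrow> 'v \<Rightarrow> nat list \<Rightarrow> 'v" where
  "rob_run tr i v [] = v"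
| "rob_run tr i v (a # xs) = rob_run tr (Suc i) (tr i v a) xs"

definition rob_eval :: "'v \<Rightarrow> 'v set \<Rightarrow> (nat \<Rightarrow> 'v \<Rightarrow> nat \<Rightarrow> 'v) \<Rightarrow> nat list \<Rightarrow> real" where
  "rob_eval s Acc tr x = (if rob_run tr 0 s x \<in> Acc then 1 else 0)"

end

theory Submission
  imports Defs
begin


lemma finite_cube[simp]: "finite (cube q n)"
proof -
  have "cube q n = {xs. set xs \<subseteq> {..<q} \<and> length xs = n}" by (auto simp: cube_def)
  thus ?thesis using finite_lists_length_eq[of "{..<q}" n] by simp
qed

lemma cube_split:
  "(\<Sum>y\<in>cube q (m1+m2). F y) = (\<Sum>y1\<in>cube q m1. \<Sum>y2\<in>cube q m2. F (y1 @ y2))"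
proof -
  have img: "cube q (m1+m2) = (\<lambda>(a,b). a @ b) ` (cube q m1 \<times> cube q m2)"
  proof
    show "cube q (m1+m2) \<subseteq> (\<lambda>(a,b). a @ b) ` (cube q m1 \<times> cube q m2)"
    proof
      fix y assume y: "y \<in> cube q (m1+m2)"
      have "y = (\<lambda>(a,b). a @ b) (take m1 y, drop m1 y)" by simp
      moreover have "(take m1 y, drop m1 y) \<in> cube q m1 \<times> cube q m2"
        using y by (auto simp: cube_def dest: in_set_takeD in_set_dropD)
      ultimately show "y \<in> (\<lambda>(a,b). a @ b) ` (cube q m1 \<times> cube q m2)" by blast
    qed
    show "(\<lambda>(a,b). a @ b) ` (cube q m1 \<times> cube q m2) \<subseteq> cube q (m1+m2)"
      by (auto simp: cube_def)
  qed
  have inj: "inj_on (\<lambda>(a,b). a @ b) (cube q m1 \<times> cube q m2)"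
    by (auto simp: inj_on_def cube_def)
  have "(\<Sum>y\<in>cube q (m1+m2). F y) = (\<Sum>(y1,y2)\<in>cube q m1 \<times> cube q m2. F (y1 @ y2))"
    unfolding img by (subst sum.reindex[OF inj]) (auto intro!: sum.cong)
  also have "\<dots> = (\<Sum>y1\<in>cube q m1. \<Sum>y2\<in>cube q m2. F (y1 @ y2))"
    by (rule sum.cartesian_product[symmetric])
  finally show ?thesis .
qed

lemma cube_one: "cube q (Suc 0) = (\<lambda>c. [c]) ` {..<q}"
  by (auto simp: cube_def length_Suc_conv)

lemma cube_prod_sum:
  fixes \<phi> :: "nat \<Rightarrow> nat \<Rightarrow> real"
  shows "(\<Sum>y\<in>cube q m. \<Prod>j<m. \<phi> j (y ! j)) = (\<Prod>j<m. \<Sum>c<q. \<phi> j c)"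
proof (induction m)
  case 0
  have "cube q 0 = {[]}" by (auto simp: cube_def)
  thus ?case by simp
next
  case (Suc m)
  have "(\<Sum>y\<in>cube q (Suc m). \<Prod>j<Suc m. \<phi> j (y ! j))
      = (\<Sum>y1\<in>cube q m. \<Sum>y2\<in>cube q (Suc 0). \<Prod>j<Suc m. \<phi> j ((y1 @ y2) ! j))"
    using cube_split[of _ q m "Suc 0"] by simp
  also have "\<dots> = (\<Sum>y1\<in>cube q m. \<Sum>c<q. (\<Prod>j<m. \<phi> j (y1 ! j)) * \<phi> m c)"
  proof (rule sum.cong[OF refl])
    fix y1 assume y1: "y1 \<in> cube q m"
    hence len: "length y1 = m" by (simp add: cube_def)
    have "(\<Sum>y2\<in>cube q (Suc 0). \<Prod>j<Suc m. \<phi> j ((y1 @ y2) ! j))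
        = (\<Sum>c<q. \<Prod>j<Suc m. \<phi> j ((y1 @ [c]) ! j))"
      unfolding cube_one by (subst sum.reindex) (auto simp: inj_on_def)
    also have "\<dots> = (\<Sum>c<q. (\<Prod>j<m. \<phi> j (y1 ! j)) * \<phi> m c)"
    proof (rule sum.cong[OF refl])
      fix c
      have "(\<Prod>j<m. \<phi> j ((y1 @ [c]) ! j)) = (\<Prod>j<m. \<phi> j (y1 ! j))"
        by (rule prod.cong) (auto simp: nth_append len)
      thus "(\<Prod>j<Suc m. \<phi> j ((y1 @ [c]) ! j)) = (\<Prod>j<m. \<phi> j (y1 ! j)) * \<phi> m c"
        by (simp add: prod.lessThan_Suc nth_append len)
    qed
    finally show "(\<Sum>y2\<in>cube q (Suc 0). \<Prod>j<Suc m. \<phi> j ((y1 @ y2) ! j))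
        = (\<Sum>c<q. (\<Prod>j<m. \<phi> j (y1 ! j)) * \<phi> m c)" .
  qed
  also have "\<dots> = (\<Sum>y1\<in>cube q m. \<Prod>j<m. \<phi> j (y1 ! j)) * (\<Sum>c<q. \<phi> m c)"
    by (simp add: sum_product)
  also have "\<dots> = (\<Prod>j<Suc m. \<Sum>c<q. \<phi> j c)" using Suc by simp
  finally show ?case .
qed

lemma card_cube: "real (card (cube q m)) = real q ^ m"
  using cube_prod_sum[where q=q and m=m and \<phi>="\<lambda>_ _. 1"] by simp

lemma expectation_cube:
  assumes "set_pmf D \<subseteq> cube q n"
  shows "measure_pmf.expectation D F = (\<Sum>x\<in>cube q n. pmf D x * F x)"
  using assms by (subst integral_measure_pmf[of "cube q n"]) auto

lemma prob_cube:
  assumes "set_pmf D \<subseteq> cube q n"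
  shows "measure_pmf.prob D A = (\<Sum>x\<in>cube q n. pmf D x * indicator A x)"
proof -
  have "measure_pmf.prob D A = measure_pmf.expectation D (indicator A)" by simp
  also have "\<dots> = (\<Sum>x\<in>cube q n. pmf D x * indicator A x)"
    by (rule expectation_cube[OF assms])
  finally show ?thesis .
qed

lemma junta:
  fixes \<phi> :: "nat \<Rightarrow> nat \<Rightarrow> real"
  assumes tw: "t_wise_uniform q n t D" and J: "J \<subseteq> {..<n}" "card J \<le> t" and q: "q > 0"
  shows "(\<Sum>x\<in>cube q n. pmf D x * (\<Prod>j\<in>J. \<phi> j (x ! j))) = (\<Prod>j\<in>J. (\<Sum>c<q. \<phi> j c) / real q)"
proof -
  have fJ: "finite J" using J(1) finite_subset by blast
  have supp: "set_pmf D \<subseteq> cube q n" using tw by (simp add: t_wise_uniform_def)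
  define P where "P = PiE J (\<lambda>_. {..<q::nat})"
  define ag where "ag a = {x::nat list. \<forall>j\<in>J. x ! j = a j}" for a :: "nat \<Rightarrow> nat"
  have fP: "finite P" unfolding P_def using fJ by (simp add: finite_PiE)
  have expand: "(\<Prod>j\<in>J. \<phi> j (x ! j)) = (\<Sum>a\<in>P. (\<Prod>j\<in>J. \<phi> j (a j)) * indicator (ag a) x)"
    if x: "x \<in> cube q n" for x
  proof -
    define a0 where "a0 = restrict (\<lambda>j. x ! j) J"
    have a0P: "a0 \<in> P" using x J(1) unfolding P_def a0_def cube_def
      by (auto simp: PiE_iff subset_iff)
    have eq: "(x \<in> ag a) \<longleftrightarrow> a = a0" if "a \<in> P" for a
    proof
      assume "x \<in> ag a"
      then show "a = a0" using that unfolding ag_def a0_def P_def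
        by (auto simp: PiE_iff extensional_def fun_eq_iff)
    next
      assume "a = a0" thus "x \<in> ag a" by (auto simp: ag_def a0_def)
    qed
    have "(\<Sum>a\<in>P. (\<Prod>j\<in>J. \<phi> j (a j)) * indicator (ag a) x)
        = (\<Sum>a\<in>P. if a = a0 then (\<Prod>j\<in>J. \<phi> j (a j)) else 0)"
      by (rule sum.cong) (auto simp: eq indicator_def)
    also have "\<dots> = (\<Prod>j\<in>J. \<phi> j (a0 j))" using a0P fP by simp
    also have "\<dots> = (\<Prod>j\<in>J. \<phi> j (x ! j))" by (simp add: a0_def)
    finally show ?thesis by simp
  qed
  have "(\<Sum>x\<in>cube q n. pmf D x * (\<Prod>j\<in>J. \<phi> j (x ! j)))
      = (\<Sum>x\<in>cube q n. \<Sum>a\<in>P. (\<Prod>j\<in>J. \<phi> j (a j)) * (pmf D x * indicator (ag a) x))"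
    by (rule sum.cong[OF refl]) (simp add: expand sum_distrib_left mult.commute mult.left_commute)
  also have "\<dots> = (\<Sum>a\<in>P. (\<Prod>j\<in>J. \<phi> j (a j)) * (\<Sum>x\<in>cube q n. pmf D x * indicator (ag a) x))"
    by (subst sum.swap) (simp only: sum_distrib_left)
  also have "\<dots> = (\<Sum>a\<in>P. (\<Prod>j\<in>J. \<phi> j (a j)) * measure_pmf.prob D (ag a))"
    by (simp only: prob_cube[OF supp])
  also have "\<dots> = (\<Sum>a\<in>P. (\<Prod>j\<in>J. \<phi> j (a j)) * (1 / real q ^ card J))"
  proof (rule sum.cong[OF refl])
    fix a assume "a \<in> P"
    hence "\<forall>i\<in>J. a i < q" by (auto simp: P_def PiE_iff)
    hence "measure_pmf.prob D (ag a) = 1 / real q ^ card J"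
      using tw J unfolding t_wise_uniform_def ag_def by blast
    thus "(\<Prod>j\<in>J. \<phi> j (a j)) * measure_pmf.prob D (ag a) = (\<Prod>j\<in>J. \<phi> j (a j)) * (1 / real q ^ card J)"
      by simp
  qed
  also have "\<dots> = (\<Prod>j\<in>J. \<Sum>c<q. \<phi> j c) / real q ^ card J"
    unfolding P_def by (simp add: prod_sum_PiE[OF fJ] sum_divide_distrib)
  also have "\<dots> = (\<Prod>j\<in>J. (\<Sum>c<q. \<phi> j c) / real q)"
    by (simp add: prod_dividef)
  finally show ?thesis .
qed



definition esym :: "(nat \<Rightarrow> real) \<Rightarrow> (nat \<Rightarrow> real) \<Rightarrow> nat \<Rightarrow> nat \<Rightarrow> real" where
  "esym a b l m = (\<Sum>S\<in>{S. S \<subseteq> {..<m} \<and> card S = l}. prod b S * prod a ({..<m} - S))"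

lemma finite_subsets_card: "finite {S. S \<subseteq> {..<m::nat} \<and> card S = l}"
  by (rule finite_subset[of _ "Pow {..<m}"]) auto

lemma esym_0: "esym a b 0 m = prod a {..<m}"
proof -
  have "S = {}" if "S \<subseteq> {..<m}" "card S = 0" for S
    using that finite_subset[OF that(1)] by auto
  hence "{S. S \<subseteq> {..<m} \<and> card S = 0} = {{}}" by auto
  thus ?thesis by (simp add: esym_def)
qed

lemma esym_Suc_Suc:
  "esym a b (Suc l) (Suc m) = esym a b (Suc l) m * a m + esym a b l m * b m"
proof -
  define F where "F l m = {S. S \<subseteq> {..<m} \<and> card S = l}" for l m :: nat
  have split: "F (Suc l) (Suc m) = F (Suc l) m \<union> insert m ` F l m"
  proof
    show "F (Suc l) (Suc m) \<subseteq> F (Suc l) m \<union> insert m ` F l m"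
    proof
      fix S assume S: "S \<in> F (Suc l) (Suc m)"
      have fS: "finite S" using S unfolding F_def by (auto intro: finite_subset)
      show "S \<in> F (Suc l) m \<union> insert m ` F l m"
      proof (cases "m \<in> S")
        case True
        hence "S = insert m (S - {m})" by auto
        moreover have "S - {m} \<in> F l m" using S True fS unfolding F_def
          by (auto simp: less_Suc_eq)
        ultimately show ?thesis by blast
      next
        case False
        thus ?thesis using S unfolding F_def by (auto simp: less_Suc_eq)
      qed
    qed
    show "F (Suc l) m \<union> insert m ` F l m \<subseteq> F (Suc l) (Suc m)"
    proof
      fix S assume "S \<in> F (Suc l) m \<union> insert m ` F l m"
      then show "S \<in> F (Suc l) (Suc m)"
      proof
        assume "S \<in> F (Suc l) m" thus ?thesis unfolding F_def by auto
      next
        assume "S \<in> insert m ` F l m"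
        then obtain T where T: "T \<in> F l m" "S = insert m T" by blast
        have "finite T" "m \<notin> T" using T unfolding F_def by (auto intro: finite_subset)
        thus ?thesis using T unfolding F_def by auto
      qed
    qed
  qed
  have disj: "F (Suc l) m \<inter> insert m ` F l m = {}" unfolding F_def by auto
  have inj: "inj_on (insert m) (F l m)" unfolding F_def inj_on_def by auto
  have fin: "finite (F l m)" "finite (F (Suc l) m)" unfolding F_def by (rule finite_subsets_card)+
  have s1: "(\<Sum>S\<in>F (Suc l) m. prod b S * prod a ({..<Suc m} - S)) = esym a b (Suc l) m * a m"
  proof -
    have "(\<Sum>S\<in>F (Suc l) m. prod b S * prod a ({..<Suc m} - S))
        = (\<Sum>S\<in>F (Suc l) m. prod b S * prod a ({..<m} - S) * a m)"
    proof (rule sum.cong[OF refl])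
      fix S assume "S \<in> F (Suc l) m"
      hence "{..<Suc m} - S = insert m ({..<m} - S)" "m \<notin> {..<m} - S" unfolding F_def by auto
      thus "prod b S * prod a ({..<Suc m} - S) = prod b S * prod a ({..<m} - S) * a m"
        by (simp add: mult.commute mult.left_commute)
    qed
    thus ?thesis by (simp add: esym_def F_def sum_distrib_right)
  qed
  have s2: "(\<Sum>S\<in>insert m ` F l m. prod b S * prod a ({..<Suc m} - S)) = esym a b l m * b m"
  proof -
    have "(\<Sum>S\<in>insert m ` F l m. prod b S * prod a ({..<Suc m} - S))
        = (\<Sum>S\<in>F l m. prod b (insert m S) * prod a ({..<Suc m} - insert m S))"
      by (rule sum.reindex[OF inj, unfolded comp_def])
    also have "\<dots> = (\<Sum>S\<in>F l m. prod b S * prod a ({..<m} - S) * b m)"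
    proof (rule sum.cong[OF refl])
      fix S assume S: "S \<in> F l m"
      hence "finite S" "m \<notin> S" unfolding F_def by (auto intro: finite_subset)
      moreover have "{..<Suc m} - insert m S = {..<m} - S" using S unfolding F_def by auto
      ultimately show "prod b (insert m S) * prod a ({..<Suc m} - insert m S) = prod b S * prod a ({..<m} - S) * b m"
        by (simp add: mult.commute mult.left_commute)
    qed
    finally show ?thesis by (simp add: esym_def F_def sum_distrib_right)
  qed
  have "esym a b (Suc l) (Suc m) = (\<Sum>S\<in>F (Suc l) (Suc m). prod b S * prod a ({..<Suc m} - S))"
    by (simp add: esym_def F_def)
  also have "\<dots> = (\<Sum>S\<in>F (Suc l) m. prod b S * prod a ({..<Suc m} - S))
       + (\<Sum>S\<in>insert m ` F l m. prod b S * prod a ({..<Suc m} - S))"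
    unfolding split using fin disj by (intro sum.union_disjoint) auto
  finally show ?thesis using s1 s2 by simp
qed

lemma esym_rec:
  "esym a b l (Suc m) = esym a b l m * a m + (if l = 0 then 0 else esym a b (l - 1) m * b m)"
  by (cases l) (simp_all add: esym_0 esym_Suc_Suc)

lemma esym_tail:
  "prod (\<lambda>j. a j + b j) {..<n} = (\<Sum>l<Suc k. esym a b l n)
     + (\<Sum>i<n. esym a b k i * b i * prod (\<lambda>j. a j + b j) {Suc i..<n})"
proof (induction n)
  case 0
  have "(\<Sum>l<Suc k. esym a b l 0) = 1"
  proof -
    have "(\<Sum>l<Suc k. esym a b l 0) = (\<Sum>l<Suc k. if l = 0 then 1 else 0)"
    proof (rule sum.cong[OF refl])
      fix l
      have "{S. S \<subseteq> {..<0::nat} \<and> card S = l} = (if l = 0 then {{}} else {})" by auto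
      thus "esym a b l 0 = (if l = 0 then 1 else 0)" by (simp add: esym_def)
    qed
    also have "\<dots> = 1" by (simp add: sum.delta)
    finally show ?thesis .
  qed
  thus ?case by simp
next
  case (Suc n)
  let ?P = "\<lambda>i n. prod (\<lambda>j. a j + b j) {i..<n}"
  have A: "(\<Sum>i<Suc n. esym a b k i * b i * ?P (Suc i) (Suc n))
     = (\<Sum>i<n. esym a b k i * b i * ?P (Suc i) n) * (a n + b n) + esym a b k n * b n"
  proof -
    have "(\<Sum>i<n. esym a b k i * b i * ?P (Suc i) (Suc n))
        = (\<Sum>i<n. esym a b k i * b i * ?P (Suc i) n * (a n + b n))"
      by (rule sum.cong[OF refl]) (simp add: prod.atLeastLessThan_Suc)
    thus ?thesis by (simp add: sum_distrib_right)
  qed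
  have B: "(\<Sum>l<Suc k. esym a b l (Suc n))
     = (\<Sum>l<Suc k. esym a b l n) * a n + (\<Sum>l<k. esym a b l n) * b n"
  proof -
    have "(\<Sum>l<Suc k. esym a b l (Suc n))
       = (\<Sum>l<Suc k. esym a b l n * a n) + (\<Sum>l<Suc k. (if l = 0 then 0 else esym a b (l - 1) n * b n))"
      by (simp add: esym_rec sum.distrib)
    also have "(\<Sum>l<Suc k. (if l = 0 then 0 else esym a b (l - 1) n * b n)) = (\<Sum>l<k. esym a b l n * b n)"
      by (subst sum.lessThan_Suc_shift) simp
    finally show ?thesis by (simp only: sum_distrib_right)
  qed
  have "prod (\<lambda>j. a j + b j) {..<Suc n} = prod (\<lambda>j. a j + b j) {..<n} * (a n + b n)" by simp
  also have "\<dots> = ((\<Sum>l<Suc k. esym a b l n) + (\<Sum>i<n. esym a b k i * b i * ?P (Suc i) n)) * (a n + b n)"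
    using Suc by simp
  also have "\<dots> = (\<Sum>l<Suc k. esym a b l (Suc n)) + (\<Sum>i<Suc n. esym a b k i * b i * ?P (Suc i) (Suc n))"
    unfolding A B by (simp add: algebra_simps sum.lessThan_Suc)
  finally show ?case .
qed

lemma esym_scale: "esym a (\<lambda>j. c * b j) l m = c ^ l * esym a b l m"
  unfolding esym_def sum_distrib_left
  by (rule sum.cong[OF refl]) (simp add: prod.distrib)

lemma esym_cong: "(\<And>j. j < m \<Longrightarrow> a j = a' j) \<Longrightarrow> (\<And>j. j < m \<Longrightarrow> b j = b' j)
  \<Longrightarrow> esym a b l m = esym a' b' l m"
  unfolding esym_def
  by (rule sum.cong[OF refl], rule arg_cong2[where f="(*)"]; rule prod.cong; auto)

definition dl :: "nat \<Rightarrow> nat \<Rightarrow> nat \<Rightarrow> real" where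
  "dl q c d = (if c = d then 1 else 0) - 1 / real q"

lemma sum_dl: assumes "d < q" shows "(\<Sum>c<q. dl q c d) = 0"
proof -
  have "(\<Sum>c<q. dl q c d) = (\<Sum>c<q. if c = d then 1 else 0) - real q * (1 / real q)"
    by (simp add: dl_def sum_subtractf)
  also have "\<dots> = 0" using assms by simp
  finally show ?thesis .
qed

lemma sum_dl_dl: assumes "d < q" "d' < q"
  shows "(\<Sum>c<q. dl q c d * dl q c d') = (if d = d' then 1 else 0) - 1 / real q"
proof -
  have q: "real q > 0" using assms by simp
  have "(\<Sum>c<q. dl q c d * dl q c d') = (\<Sum>c<q. (if c = d then (if d = d' then 1 else 0) else 0) - (if c = d then 1 / real q else 0)
     - (if c = d' then 1 / real q else 0) + 1 / real q ^ 2)"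
    by (rule sum.cong[OF refl]) (auto simp: dl_def field_simps power2_eq_square)
  also have "\<dots> = (if d = d' then 1 else 0) - 1 / real q - 1 / real q + real q / real q ^ 2"
    using assms by (simp add: sum.distrib sum_subtractf)
  also have "\<dots> = (if d = d' then 1 else 0) - 1 / real q"
    using q by (simp add: power2_eq_square)
  finally show ?thesis .
qed

lemma sc_prob_dl:
  assumes "length x = n" "q > 0"
  shows "sc_prob q \<eta> x y = (\<Prod>j<n. 1 / real q + (1 - \<eta>) * dl q (x ! j) (y ! j))"
  unfolding sc_prob_def assms(1)
  by (rule prod.cong[OF refl]) (use assms(2) in \<open>auto simp: dl_def field_simps\<close>)



lemma rob_run_append:
  "rob_run tr i v (xs @ ys) = rob_run tr (i + length xs) (rob_run tr i v xs) ys"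
  by (induction xs arbitrary: i v) auto

lemma rob_run_in:
  assumes "is_robp q n w V s Acc tr"
  shows "v \<in> V i \<Longrightarrow> set y \<subseteq> {..<q} \<Longrightarrow> i + length y \<le> n \<Longrightarrow> rob_run tr i v y \<in> V (i + length y)"
proof (induction y arbitrary: i v)
  case Nil thus ?case by simp
next
  case (Cons a y)
  have "tr i v a \<in> V (Suc i)" using assms Cons.prems unfolding is_robp_def by auto
  hence "rob_run tr (Suc i) (tr i v a) y \<in> V (Suc i + length y)"
    using Cons.IH[of "tr i v a" "Suc i"] Cons.prems by auto
  thus ?case by simp
qed

lemma rob_split:
  assumes robp: "is_robp q n w V s Acc tr" and y1: "y1 \<in> cube q m" and mn: "m \<le> n"
  shows "rob_eval s Acc tr (y1 @ y2) = (\<Sum>v\<in>V m. (if rob_run tr 0 s y1 = v then 1 else 0) *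
            (if rob_run tr m v y2 \<in> Acc then 1 else 0))"
proof -
  have len: "length y1 = m" and set1: "set y1 \<subseteq> {..<q}" using y1 by (auto simp: cube_def)
  have s0: "s \<in> V 0" using robp by (simp add: is_robp_def)
  have inV: "rob_run tr 0 s y1 \<in> V m" using rob_run_in[OF robp s0 set1] len mn by simp
  have fin: "finite (V m)" using robp mn by (simp add: is_robp_def)
  have "(\<Sum>v\<in>V m. (if rob_run tr 0 s y1 = v then 1 else 0) * (if rob_run tr m v y2 \<in> Acc then 1 else (0::real)))
     = (\<Sum>v\<in>V m. if v = rob_run tr 0 s y1 then (if rob_run tr m v y2 \<in> Acc then 1 else 0) else 0)"
    by (rule sum.cong) auto
  also have "\<dots> = (if rob_run tr m (rob_run tr 0 s y1) y2 \<in> Acc then 1 else 0)"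
    using inV fin by (simp add: sum.delta')
  finally show ?thesis by (simp add: rob_eval_def rob_run_append len)
qed

definition Wq :: "nat \<Rightarrow> nat \<Rightarrow> nat \<Rightarrow> real" where
  "Wq q u u' = (\<Sum>c<q. dl q c u * dl q c u')"

definition NN :: "nat \<Rightarrow> nat \<Rightarrow> (nat list \<Rightarrow> real) \<Rightarrow> nat set \<Rightarrow> real" where
  "NN q m g A = (\<Sum>y\<in>cube q m. \<Sum>y'\<in>cube q m. g y * g y' * (\<Prod>j\<in>A. Wq q (y ! j) (y' ! j)))"

lemma NN_nonneg:
  assumes A: "A \<subseteq> {..<m}" and q: "q > 0"
  shows "0 \<le> NN q m g A"
proof -
  define \<psi> where "\<psi> j c u = (if j \<in> A then dl q c u else (if c = 0 then 1 else 0))" for j c u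
  have "0 \<le> (\<Sum>z\<in>cube q m. (\<Sum>y\<in>cube q m. g y * (\<Prod>j<m. \<psi> j (z ! j) (y ! j)))^2)"
    by (simp add: sum_nonneg)
  also have "\<dots> = (\<Sum>z\<in>cube q m. \<Sum>y\<in>cube q m. \<Sum>y'\<in>cube q m.
      g y * g y' * (\<Prod>j<m. \<psi> j (z ! j) (y ! j) * \<psi> j (z ! j) (y' ! j)))"
    by (simp add: power2_eq_square sum_product prod.distrib mult_ac)
  also have "\<dots> = (\<Sum>y\<in>cube q m. \<Sum>y'\<in>cube q m. g y * g y' *
      (\<Sum>z\<in>cube q m. \<Prod>j<m. \<psi> j (z ! j) (y ! j) * \<psi> j (z ! j) (y' ! j)))"
    by (subst sum.swap, rule sum.cong[OF refl], subst sum.swap) (simp add: sum_distrib_left)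
  also have "\<dots> = (\<Sum>y\<in>cube q m. \<Sum>y'\<in>cube q m. g y * g y' *
      (\<Prod>j<m. \<Sum>c<q. \<psi> j c (y ! j) * \<psi> j c (y' ! j)))"
  proof (intro sum.cong refl)
    fix y y'
    show "g y * g y' * (\<Sum>z\<in>cube q m. \<Prod>j<m. \<psi> j (z ! j) (y ! j) * \<psi> j (z ! j) (y' ! j)) =
         g y * g y' * (\<Prod>j<m. \<Sum>c<q. \<psi> j c (y ! j) * \<psi> j c (y' ! j))"
      using cube_prod_sum[where q=q and m=m and \<phi>="\<lambda>j c. \<psi> j c (y ! j) * \<psi> j c (y' ! j)"] by simp
  qed
  also have "\<dots> = NN q m g A"
  proof -
    have "(\<Prod>j<m. \<Sum>c<q. \<psi> j c (u j) * \<psi> j c (u' j)) = (\<Prod>j\<in>A. Wq q (u j) (u' j))" for u u'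
    proof -
      have "(\<Prod>j<m. \<Sum>c<q. \<psi> j c (u j) * \<psi> j c (u' j)) = (\<Prod>j<m. if j \<in> A then Wq q (u j) (u' j) else 1)"
      proof (rule prod.cong[OF refl])
        have one: "(\<Sum>c<q. (if c = 0 then 1 else 0) * (if c = 0 then 1 else (0::real))) = 1"
        proof -
          have "(\<Sum>c<q. (if c = 0 then 1 else 0) * (if c = 0 then 1 else (0::real))) = (\<Sum>c<q. if c = 0 then 1 else 0)"
            by (rule sum.cong) auto
          thus ?thesis using q by simp
        qed
        fix j show "(\<Sum>c<q. \<psi> j c (u j) * \<psi> j c (u' j)) = (if j \<in> A then Wq q (u j) (u' j) else 1)"
          using one by (auto simp: \<psi>_def Wq_def)
      qed
      also have "\<dots> = (\<Prod>j\<in>{..<m} \<inter> A. Wq q (u j) (u' j))" by (simp add: prod.inter_restrict)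
      also have "{..<m} \<inter> A = A" using A by auto
      finally show ?thesis .
    qed
    thus ?thesis unfolding NN_def by simp
  qed
  finally show ?thesis .
qed

lemma NN_total:
  assumes q: "q > 0" and g: "\<And>y. y \<in> cube q m \<Longrightarrow> \<bar>g y\<bar> \<le> 1"
  shows "(\<Sum>A\<in>Pow {..<m}. (1 / real q) ^ (m - card A) * NN q m g A) \<le> real q ^ m"
proof -
  have key: "(\<Sum>A\<in>Pow {..<m}. (1 / real q) ^ (m - card A) * (\<Prod>j\<in>A. Wq q (y ! j) (y' ! j)))
      = (if y = y' then 1 else 0)" if y: "y \<in> cube q m" and y': "y' \<in> cube q m" for y y'
  proof -
    have "(\<Sum>A\<in>Pow {..<m}. (1 / real q) ^ (m - card A) * (\<Prod>j\<in>A. Wq q (y ! j) (y' ! j)))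
        = (\<Sum>A\<in>Pow {..<m}. (\<Prod>j\<in>A. Wq q (y ! j) (y' ! j)) * (\<Prod>j\<in>{..<m} - A. 1 / real q))"
    proof (rule sum.cong[OF refl])
      fix A assume "A \<in> Pow {..<m}"
      hence "card ({..<m} - A) = m - card A" by (simp add: card_Diff_subset finite_subset)
      thus "(1 / real q) ^ (m - card A) * (\<Prod>j\<in>A. Wq q (y ! j) (y' ! j))
          = (\<Prod>j\<in>A. Wq q (y ! j) (y' ! j)) * (\<Prod>j\<in>{..<m} - A. 1 / real q)" by simp
    qed
    also have "\<dots> = (\<Prod>j<m. Wq q (y ! j) (y' ! j) + 1 / real q)"
      by (rule prod_add[symmetric]) simp
    also have "\<dots> = (\<Prod>j<m. if y ! j = y' ! j then 1 else 0)"
    proof (rule prod.cong[OF refl])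
      fix j assume "j \<in> {..<m}"
      hence "y ! j \<in> set y" "y' ! j \<in> set y'" using y y' by (auto simp: cube_def)
      hence "y ! j < q" "y' ! j < q" using y y' by (auto simp: cube_def)
      thus "Wq q (y ! j) (y' ! j) + 1 / real q = (if y ! j = y' ! j then 1 else 0)"
        by (simp add: Wq_def sum_dl_dl)
    qed
    also have "\<dots> = (if y = y' then 1 else 0)"
    proof (cases "y = y'")
      case True thus ?thesis by simp
    next
      case False
      have "length y = m" "length y' = m" using y y' by (auto simp: cube_def)
      then obtain j where "j < m" "y ! j \<noteq> y' ! j" using False by (auto simp: list_eq_iff_nth_eq)
      thus ?thesis using False by (intro trans[OF prod_zero]) auto
    qed
    finally show ?thesis .
  qed
  have "(\<Sum>A\<in>Pow {..<m}. (1 / real q) ^ (m - card A) * NN q m g A)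
      = (\<Sum>y\<in>cube q m. \<Sum>y'\<in>cube q m. g y * g y' *
          (\<Sum>A\<in>Pow {..<m}. (1 / real q) ^ (m - card A) * (\<Prod>j\<in>A. Wq q (y ! j) (y' ! j))))"
    unfolding NN_def
    by (simp add: sum_distrib_left sum.swap[of _ "Pow {..<m}"] mult_ac)
  also have "\<dots> = (\<Sum>y\<in>cube q m. \<Sum>y'\<in>cube q m. if y' = y then g y * g y else 0)"
    by (intro sum.cong refl) (simp add: key)
  also have "\<dots> = (\<Sum>y\<in>cube q m. g y * g y)" by (simp add: sum.delta)
  also have "\<dots> \<le> (\<Sum>y\<in>cube q m. 1)"
  proof (rule sum_mono)
    fix y assume "y \<in> cube q m"
    hence "\<bar>g y\<bar> \<le> 1" by (rule g)
    hence "\<bar>g y\<bar> * \<bar>g y\<bar> \<le> 1 * 1" by (intro mult_mono) auto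
    thus "g y * g y \<le> 1" by (simp add: abs_mult[symmetric])
  qed
  also have "\<dots> = real q ^ m" using card_cube[of q m] by simp
  finally show ?thesis .
qed



lemma sum4_swap:
  fixes p :: "'x \<Rightarrow> real"
  shows "(\<Sum>x\<in>X. p x * (\<Sum>a\<in>A. \<Sum>b\<in>B. \<Sum>c\<in>C. \<Sum>d\<in>E. f a b c d x))
       = (\<Sum>a\<in>A. \<Sum>b\<in>B. \<Sum>c\<in>C. \<Sum>d\<in>E. \<Sum>x\<in>X. p x * f a b c d x)"
proof -
  have "(\<Sum>x\<in>X. p x * (\<Sum>a\<in>A. \<Sum>b\<in>B. \<Sum>c\<in>C. \<Sum>d\<in>E. f a b c d x))
      = (\<Sum>x\<in>X. \<Sum>a\<in>A. \<Sum>b\<in>B. \<Sum>c\<in>C. \<Sum>d\<in>E. p x * f a b c d x)"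
    by (simp add: sum_distrib_left)
  also have "\<dots> = (\<Sum>a\<in>A. \<Sum>x\<in>X. \<Sum>b\<in>B. \<Sum>c\<in>C. \<Sum>d\<in>E. p x * f a b c d x)"
    by (rule sum.swap)
  also have "\<dots> = (\<Sum>a\<in>A. \<Sum>b\<in>B. \<Sum>x\<in>X. \<Sum>c\<in>C. \<Sum>d\<in>E. p x * f a b c d x)"
    by (rule sum.cong[OF refl], rule sum.swap)
  also have "\<dots> = (\<Sum>a\<in>A. \<Sum>b\<in>B. \<Sum>c\<in>C. \<Sum>x\<in>X. \<Sum>d\<in>E. p x * f a b c d x)"
    by (rule sum.cong[OF refl], rule sum.cong[OF refl], rule sum.swap)
  also have "\<dots> = (\<Sum>a\<in>A. \<Sum>b\<in>B. \<Sum>c\<in>C. \<Sum>d\<in>E. \<Sum>x\<in>X. p x * f a b c d x)"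
    by (rule sum.cong[OF refl], rule sum.cong[OF refl], rule sum.cong[OF refl], rule sum.swap)
  finally show ?thesis .
qed

lemma cross:
  assumes q: "q > 0" and tw: "t_wise_uniform q n (2 * Suc k') D" and i: "i < n"
    and S: "S \<subseteq> {..<i}" "card S = k'" and T: "T \<subseteq> {..<i}" "card T = k'"
    and y: "y \<in> cube q (Suc i)" and y': "y' \<in> cube q (Suc i)"
  shows "(\<Sum>x\<in>cube q n. pmf D x * ((\<Prod>j\<in>insert i S. dl q (x ! j) (y ! j)) *
            (\<Prod>j\<in>insert i T. dl q (x ! j) (y' ! j))))
       = (if S = T then (1 / real q) ^ Suc k' * (\<Prod>j\<in>insert i S. Wq q (y ! j) (y' ! j)) else 0)"
proof -
  define S' where "S' = insert i S"
  define T' where "T' = insert i T"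
  define J where "J = S' \<union> T'"
  have fS: "finite S" "finite T" using S T finite_subset by blast+
  have iS: "i \<notin> S" "i \<notin> T" using S T by auto
  have cS': "card S' = Suc k'" "card T' = Suc k'" using fS iS S T by (simp_all add: S'_def T'_def)
  have fJ: "finite J" using fS by (simp add: J_def S'_def T'_def)
  have Jn: "J \<subseteq> {..<n}" using S T i by (auto simp: J_def S'_def T'_def)
  have cJ: "card J \<le> 2 * Suc k'"
    using card_Un_le[of S' T'] cS' by (simp add: J_def)
  have yq: "y ! j < q" "y' ! j < q" if "j \<in> J" for j
  proof -
    have "j < Suc i" using that S T by (auto simp: J_def S'_def T'_def)
    hence "y ! j \<in> set y" "y' ! j \<in> set y'" using y y' by (auto simp: cube_def)
    thus "y ! j < q" "y' ! j < q" using y y' by (auto simp: cube_def)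
  qed
  define \<phi> where "\<phi> j c = (if j \<in> S' then dl q c (y ! j) else 1) * (if j \<in> T' then dl q c (y' ! j) else 1)" for j c
  have prodJ: "(\<Prod>j\<in>S'. dl q (x ! j) (y ! j)) * (\<Prod>j\<in>T'. dl q (x ! j) (y' ! j)) = (\<Prod>j\<in>J. \<phi> j (x ! j))" for x
  proof -
    have "(\<Prod>j\<in>J. \<phi> j (x ! j)) = (\<Prod>j\<in>J. if j \<in> S' then dl q (x ! j) (y ! j) else 1) *
        (\<Prod>j\<in>J. if j \<in> T' then dl q (x ! j) (y' ! j) else 1)"
      by (simp add: \<phi>_def prod.distrib)
    also have "\<dots> = (\<Prod>j\<in>J \<inter> S'. dl q (x ! j) (y ! j)) * (\<Prod>j\<in>J \<inter> T'. dl q (x ! j) (y' ! j))"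
      using fJ by (simp add: prod.inter_restrict)
    also have "J \<inter> S' = S'" by (auto simp: J_def)
    also have "J \<inter> T' = T'" by (auto simp: J_def)
    finally show ?thesis by simp
  qed
  have "(\<Sum>x\<in>cube q n. pmf D x * ((\<Prod>j\<in>insert i S. dl q (x ! j) (y ! j)) *
            (\<Prod>j\<in>insert i T. dl q (x ! j) (y' ! j))))
      = (\<Sum>x\<in>cube q n. pmf D x * (\<Prod>j\<in>J. \<phi> j (x ! j)))"
    using prodJ by (simp add: S'_def T'_def)
  also have "\<dots> = (\<Prod>j\<in>J. (\<Sum>c<q. \<phi> j c) / real q)"
    by (rule junta[OF tw Jn cJ q])
  also have "\<dots> = (if S = T then (1 / real q) ^ Suc k' * (\<Prod>j\<in>insert i S. Wq q (y ! j) (y' ! j)) else 0)"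
  proof (cases "S = T")
    case True
    hence JS: "J = S'" "T' = S'" by (auto simp: J_def S'_def T'_def)
    have "(\<Prod>j\<in>J. (\<Sum>c<q. \<phi> j c) / real q) = (\<Prod>j\<in>S'. (1 / real q) * Wq q (y ! j) (y' ! j))"
      by (rule prod.cong) (auto simp: JS \<phi>_def Wq_def)
    also have "\<dots> = (1 / real q) ^ Suc k' * (\<Prod>j\<in>S'. Wq q (y ! j) (y' ! j))"
      by (simp only: prod.distrib prod_constant cS')
    finally show ?thesis using True by (simp add: S'_def)
  next
    case False
    hence "S' \<noteq> T'" using iS by (auto simp: S'_def T'_def)
    then obtain j where j: "(j \<in> S' \<and> j \<notin> T') \<or> (j \<in> T' \<and> j \<notin> S')" by blast
    hence jJ: "j \<in> J" by (auto simp: J_def)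
    have "(\<Sum>c<q. \<phi> j c) = 0"
      using j yq[OF jJ] by (auto simp: \<phi>_def sum_dl)
    hence "(\<Prod>j\<in>J. (\<Sum>c<q. \<phi> j c) / real q) = 0"
      using jJ fJ by (intro prod_zero) auto
    thus ?thesis using False by simp
  qed
  finally show ?thesis .
qed

lemma G_bound:
  assumes q: "q > 0" and tw: "t_wise_uniform q n (2 * Suc k') D" and i: "i < n"
    and g: "\<And>y. y \<in> cube q (Suc i) \<Longrightarrow> \<bar>g y\<bar> \<le> 1"
  shows "(\<Sum>x\<in>cube q n. pmf D x * (\<Sum>y\<in>cube q (Suc i). g y *
     (esym (\<lambda>_. 1 / real q) (\<lambda>j. dl q (x ! j) (y ! j)) k' i * dl q (x ! i) (y ! i)))^2) \<le> 1"
proof -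
  define F where "F = {S. S \<subseteq> {..<i} \<and> card S = k'}"
  define r where "r = 1 / real q"
  define c where "c = r ^ (i - k')"
  define Y where "Y = cube q (Suc i)"
  have r0: "r > 0" using q by (simp add: r_def)
  have fF: "finite F" unfolding F_def by (rule finite_subsets_card)
  let ?P = "\<lambda>S (y::nat list) (x::nat list). \<Prod>j\<in>insert i S. dl q (x ! j) (y ! j)"
  have eG: "(\<Sum>y\<in>Y. g y * (esym (\<lambda>_. r) (\<lambda>j. dl q (x ! j) (y ! j)) k' i * dl q (x ! i) (y ! i)))
      = (\<Sum>S\<in>F. \<Sum>y\<in>Y. c * g y * ?P S y x)" for x
  proof -
    have "esym (\<lambda>_. r) (\<lambda>j. dl q (x ! j) (y ! j)) k' i * dl q (x ! i) (y ! i)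
        = (\<Sum>S\<in>F. c * ?P S y x)" for y
    proof -
      have "esym (\<lambda>_. r) (\<lambda>j. dl q (x ! j) (y ! j)) k' i * dl q (x ! i) (y ! i)
          = (\<Sum>S\<in>F. (\<Prod>j\<in>S. dl q (x ! j) (y ! j)) * r ^ card ({..<i} - S) * dl q (x ! i) (y ! i))"
        by (simp add: esym_def F_def sum_distrib_right)
      also have "\<dots> = (\<Sum>S\<in>F. c * ?P S y x)"
      proof (rule sum.cong[OF refl])
        fix S assume S: "S \<in> F"
        hence "finite S" "i \<notin> S" "card ({..<i} - S) = i - k'" unfolding F_def
          by (auto simp: card_Diff_subset finite_subset)
        thus "(\<Prod>j\<in>S. dl q (x ! j) (y ! j)) * r ^ card ({..<i} - S) * dl q (x ! i) (y ! i) = c * ?P S y x"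
          by (simp add: c_def mult_ac)
      qed
      finally show ?thesis .
    qed
    hence "(\<Sum>y\<in>Y. g y * (esym (\<lambda>_. r) (\<lambda>j. dl q (x ! j) (y ! j)) k' i * dl q (x ! i) (y ! i)))
        = (\<Sum>y\<in>Y. \<Sum>S\<in>F. c * g y * ?P S y x)"
      by (simp add: sum_distrib_left mult_ac)
    also have "\<dots> = (\<Sum>S\<in>F. \<Sum>y\<in>Y. c * g y * ?P S y x)" by (rule sum.swap)
    finally show ?thesis .
  qed
  have sq: "(\<Sum>S\<in>F. \<Sum>y\<in>Y. c * g y * ?P S y x)^2
      = (\<Sum>S\<in>F. \<Sum>T\<in>F. \<Sum>y\<in>Y. \<Sum>y'\<in>Y. (c * g y * ?P S y x) * (c * g y' * ?P T y' x))" for x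
    by (simp add: power2_eq_square sum_product)
  have "(\<Sum>x\<in>cube q n. pmf D x * (\<Sum>y\<in>Y. g y *
     (esym (\<lambda>_. r) (\<lambda>j. dl q (x ! j) (y ! j)) k' i * dl q (x ! i) (y ! i)))^2)
     = (\<Sum>x\<in>cube q n. pmf D x * (\<Sum>S\<in>F. \<Sum>T\<in>F. \<Sum>y\<in>Y. \<Sum>y'\<in>Y. (c * g y * ?P S y x) * (c * g y' * ?P T y' x)))"
    by (simp only: eG sq)
  also have "\<dots> = (\<Sum>S\<in>F. \<Sum>T\<in>F. \<Sum>y\<in>Y. \<Sum>y'\<in>Y. \<Sum>x\<in>cube q n. pmf D x * ((c * g y * ?P S y x) * (c * g y' * ?P T y' x)))"
    by (rule sum4_swap)
  also have "\<dots> = (\<Sum>S\<in>F. \<Sum>T\<in>F. \<Sum>y\<in>Y. \<Sum>y'\<in>Y. c^2 * g y * g y' *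
       (\<Sum>x\<in>cube q n. pmf D x * (?P S y x * ?P T y' x)))"
    by (intro sum.cong refl) (simp add: sum_distrib_left power2_eq_square mult_ac)
  also have "\<dots> = (\<Sum>S\<in>F. \<Sum>T\<in>F. \<Sum>y\<in>Y. \<Sum>y'\<in>Y. c^2 * g y * g y' *
       (if S = T then r ^ Suc k' * (\<Prod>j\<in>insert i S. Wq q (y ! j) (y' ! j)) else 0))"
  proof (intro sum.cong refl)
    fix S T y y' assume "S \<in> F" "T \<in> F" "y \<in> Y" "y' \<in> Y"
    thus "c^2 * g y * g y' * (\<Sum>x\<in>cube q n. pmf D x * (?P S y x * ?P T y' x)) =
       c^2 * g y * g y' * (if S = T then r ^ Suc k' * (\<Prod>j\<in>insert i S. Wq q (y ! j) (y' ! j)) else 0)"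
      using cross[OF q tw i, of S T y y'] unfolding F_def Y_def r_def by simp
  qed
  also have "\<dots> = (\<Sum>S\<in>F. \<Sum>y\<in>Y. \<Sum>y'\<in>Y. c^2 * g y * g y' * (r ^ Suc k' * (\<Prod>j\<in>insert i S. Wq q (y ! j) (y' ! j))))"
  proof (rule sum.cong[OF refl])
    fix S assume S: "S \<in> F"
    have "(\<Sum>T\<in>F. \<Sum>y\<in>Y. \<Sum>y'\<in>Y. c^2 * g y * g y' *
       (if S = T then r ^ Suc k' * (\<Prod>j\<in>insert i S. Wq q (y ! j) (y' ! j)) else 0))
      = (\<Sum>T\<in>F. if S = T then (\<Sum>y\<in>Y. \<Sum>y'\<in>Y. c^2 * g y * g y' * (r ^ Suc k' * (\<Prod>j\<in>insert i S. Wq q (y ! j) (y' ! j)))) else 0)"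
      by (rule sum.cong) auto
    also have "\<dots> = (\<Sum>y\<in>Y. \<Sum>y'\<in>Y. c^2 * g y * g y' * (r ^ Suc k' * (\<Prod>j\<in>insert i S. Wq q (y ! j) (y' ! j))))"
      using S fF by simp
    finally show "(\<Sum>T\<in>F. \<Sum>y\<in>Y. \<Sum>y'\<in>Y. c^2 * g y * g y' *
       (if S = T then r ^ Suc k' * (\<Prod>j\<in>insert i S. Wq q (y ! j) (y' ! j)) else 0))
      = (\<Sum>y\<in>Y. \<Sum>y'\<in>Y. c^2 * g y * g y' * (r ^ Suc k' * (\<Prod>j\<in>insert i S. Wq q (y ! j) (y' ! j))))" .
  qed
  also have "\<dots> = c^2 * r ^ Suc k' * (\<Sum>S\<in>F. NN q (Suc i) g (insert i S))"
    by (simp add: NN_def Y_def sum_distrib_left mult_ac)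
  finally have eq: "(\<Sum>x\<in>cube q n. pmf D x * (\<Sum>y\<in>Y. g y *
     (esym (\<lambda>_. r) (\<lambda>j. dl q (x ! j) (y ! j)) k' i * dl q (x ! i) (y ! i)))^2)
     = c^2 * r ^ Suc k' * (\<Sum>S\<in>F. NN q (Suc i) g (insert i S))" .
  define X where "X = (\<Sum>S\<in>F. NN q (Suc i) g (insert i S))"
  have NNn: "0 \<le> NN q (Suc i) g A" if "A \<in> Pow {..<Suc i}" for A
    using NN_nonneg[OF _ q] that by auto
  have X0: "0 \<le> X" unfolding X_def
    by (rule sum_nonneg, rule NNn) (auto simp: F_def)
  have bound: "c^2 * r ^ Suc k' * X \<le> 1"
  proof (cases "F = {}")
    case True thus ?thesis by (simp add: X_def)
  next
    case False
    then obtain S0 where "S0 \<in> F" by blast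
    hence "card S0 \<le> card {..<i}" unfolding F_def by (intro card_mono) auto
    hence ki: "k' \<le> i" using \<open>S0 \<in> F\<close> by (simp add: F_def)
    have inj: "inj_on (insert i) F" unfolding F_def inj_on_def by auto
    have "r ^ (i - k') * X = (\<Sum>S\<in>F. r ^ (Suc i - card (insert i S)) * NN q (Suc i) g (insert i S))"
    proof -
      have "card (insert i S) = Suc k'" if "S \<in> F" for S
      proof -
        have "finite S" "i \<notin> S" "card S = k'" using that finite_subset[of S "{..<i}"] unfolding F_def by auto
        thus ?thesis by simp
      qed
      thus ?thesis by (simp add: X_def sum_distrib_left)
    qed
    also have "\<dots> = (\<Sum>A\<in>insert i ` F. r ^ (Suc i - card A) * NN q (Suc i) g A)"
      by (simp add: sum.reindex[OF inj])
    also have "\<dots> \<le> (\<Sum>A\<in>Pow {..<Suc i}. r ^ (Suc i - card A) * NN q (Suc i) g A)"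
      by (rule sum_mono2) (auto simp: F_def NNn r0 less_imp_le)
    also have "\<dots> \<le> real q ^ Suc i"
      unfolding r_def by (rule NN_total[OF q]) (simp add: g)
    finally have h: "r ^ (i - k') * X \<le> real q ^ Suc i" .
    have "c^2 * r ^ Suc k' * X = (r ^ (i - k') * r ^ Suc k') * (r ^ (i - k') * X)"
      by (simp add: c_def power2_eq_square mult_ac)
    also have "\<dots> \<le> (r ^ (i - k') * r ^ Suc k') * real q ^ Suc i"
      using h r0 by (intro mult_left_mono) auto
    also have "r ^ (i - k') * r ^ Suc k' = r ^ Suc i"
      using ki by (simp add: power_add[symmetric])
    also have "r ^ Suc i * real q ^ Suc i = 1"
      using q by (simp add: r_def power_mult_distrib[symmetric])
    finally show ?thesis .
  qed
  show ?thesis using eq bound by (simp add: X_def r_def Y_def)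
qed



lemma dl_sym: "dl q c d = dl q d c" by (simp add: dl_def)

lemma factor_nonneg:
  assumes "q > 0" "0 \<le> \<rho>" "\<rho> \<le> 1"
  shows "0 \<le> 1 / real q + \<rho> * dl q d c"
proof (cases "d = c")
  case True
  have "1 / real q \<le> 1" using assms by simp
  hence "0 \<le> \<rho> * (1 - 1 / real q)" using assms by simp
  moreover have "0 \<le> 1 / real q" by simp
  ultimately show ?thesis using True by (simp add: dl_def)
next
  case False
  have "\<rho> / real q \<le> 1 / real q" using assms by (simp add: divide_right_mono)
  thus ?thesis using False by (simp add: dl_def)
qed

lemma kern_sum:
  assumes q: "q > 0" and u: "\<And>j. j < m \<Longrightarrow> u j < q"
  shows "(\<Sum>y\<in>cube q m. \<Prod>j<m. 1 / real q + \<rho> * dl q (u j) (y ! j)) = 1"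
proof -
  have "(\<Sum>y\<in>cube q m. \<Prod>j<m. 1 / real q + \<rho> * dl q (u j) (y ! j))
      = (\<Prod>j<m. \<Sum>c<q. 1 / real q + \<rho> * dl q (u j) c)"
    by (rule cube_prod_sum)
  also have "\<dots> = (\<Prod>j<m. (1::real))"
  proof (rule prod.cong[OF refl])
    fix j assume "j \<in> {..<m}"
    hence "(\<Sum>c<q. dl q c (u j)) = 0" using u by (simp add: sum_dl)
    hence "(\<Sum>c<q. dl q (u j) c) = 0" by (simp add: dl_sym)
    thus "(\<Sum>c<q. 1 / real q + \<rho> * dl q (u j) c) = 1"
      using q by (simp add: sum.distrib sum_distrib_left[symmetric])
  qed
  finally show ?thesis by simp
qed

lemma sum2_swap:
  fixes p :: "'x \<Rightarrow> real"
  shows "(\<Sum>x\<in>X. p x * (\<Sum>a\<in>A. \<Sum>b\<in>B. f a b x))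
       = (\<Sum>a\<in>A. \<Sum>b\<in>B. \<Sum>x\<in>X. p x * f a b x)"
proof -
  have "(\<Sum>x\<in>X. p x * (\<Sum>a\<in>A. \<Sum>b\<in>B. f a b x)) = (\<Sum>x\<in>X. \<Sum>a\<in>A. \<Sum>b\<in>B. p x * f a b x)"
    by (simp add: sum_distrib_left)
  also have "\<dots> = (\<Sum>a\<in>A. \<Sum>x\<in>X. \<Sum>b\<in>B. p x * f a b x)" by (rule sum.swap)
  also have "\<dots> = (\<Sum>a\<in>A. \<Sum>b\<in>B. \<Sum>x\<in>X. p x * f a b x)"
    by (rule sum.cong[OF refl], rule sum.swap)
  finally show ?thesis .
qed

lemma term1_zero:
  assumes q: "q > 0" and tw: "t_wise_uniform q n t D" and L: "1 \<le> L" "L \<le> t"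
    and fy: "\<And>y. True"
  shows "(\<Sum>x\<in>cube q n. pmf D x * (\<Sum>y\<in>cube q n. f y *
           esym (\<lambda>_. 1 / real q) (\<lambda>j. \<rho> * dl q (x ! j) (y ! j)) L n)) = 0"
proof -
  define F where "F = {S. S \<subseteq> {..<n} \<and> card S = L}"
  have z: "(\<Sum>x\<in>cube q n. pmf D x * (\<Prod>j\<in>S. \<rho> * dl q (x ! j) (y ! j))) = 0"
    if S: "S \<in> F" and y: "y \<in> cube q n" for S y
  proof -
    have Sn: "S \<subseteq> {..<n}" "card S \<le> t" using S L by (auto simp: F_def)
    have "S \<noteq> {}" using S L by (auto simp: F_def)
    then obtain j where j: "j \<in> S" by blast
    have fS: "finite S" using Sn finite_subset by blast
    have "y ! j \<in> set y" using j Sn y by (auto simp: cube_def)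
    hence "y ! j < q" using y by (auto simp: cube_def)
    hence "(\<Sum>c<q. \<rho> * dl q c (y ! j)) = 0" by (simp add: sum_distrib_left[symmetric] sum_dl)
    hence "(\<Prod>j\<in>S. (\<Sum>c<q. \<rho> * dl q c (y ! j)) / real q) = 0"
      using j fS by (intro prod_zero) auto
    thus ?thesis using junta[OF tw Sn q, of "\<lambda>j c. \<rho> * dl q c (y ! j)"] by simp
  qed
  have "(\<Sum>x\<in>cube q n. pmf D x * (\<Sum>y\<in>cube q n. f y *
           esym (\<lambda>_. 1 / real q) (\<lambda>j. \<rho> * dl q (x ! j) (y ! j)) L n))
     = (\<Sum>x\<in>cube q n. pmf D x * (\<Sum>y\<in>cube q n. \<Sum>S\<in>F. f y * (\<Prod>j\<in>{..<n} - S. 1 / real q) *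
           (\<Prod>j\<in>S. \<rho> * dl q (x ! j) (y ! j))))"
    by (simp add: esym_def F_def sum_distrib_left mult_ac)
  also have "\<dots> = (\<Sum>y\<in>cube q n. \<Sum>S\<in>F. \<Sum>x\<in>cube q n. pmf D x * (f y * (\<Prod>j\<in>{..<n} - S. 1 / real q) *
           (\<Prod>j\<in>S. \<rho> * dl q (x ! j) (y ! j))))"
    by (rule sum2_swap)
  also have "\<dots> = (\<Sum>y\<in>cube q n. \<Sum>S\<in>F. (f y * (\<Prod>j\<in>{..<n} - S. 1 / real q)) *
           (\<Sum>x\<in>cube q n. pmf D x * (\<Prod>j\<in>S. \<rho> * dl q (x ! j) (y ! j))))"
    by (intro sum.cong refl) (simp add: sum_distrib_left mult_ac)
  also have "\<dots> = 0" by (simp add: z)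
  finally show ?thesis .
qed

lemma abs_le_sq: "\<bar>z::real\<bar> \<le> (1 + z^2) / 2"
proof -
  have "0 \<le> (\<bar>z\<bar> - 1)^2" by simp
  thus ?thesis by (simp add: power2_eq_square algebra_simps abs_mult_self_eq)
qed

lemma term2:
  assumes q: "q > 0" and tw: "t_wise_uniform q n (2 * Suc k') D" and \<rho>: "0 \<le> \<rho>" "\<rho> \<le> 1"
    and robp: "is_robp q n w V s Acc tr" and i: "i < n"
  shows "\<bar>\<Sum>x\<in>cube q n. pmf D x * (\<Sum>y\<in>cube q n. rob_eval s Acc tr y *
      (esym (\<lambda>_. 1 / real q) (\<lambda>j. \<rho> * dl q (x ! j) (y ! j)) k' i * (\<rho> * dl q (x ! i) (y ! i)) *
       (\<Prod>j\<in>{Suc i..<n}. 1 / real q + \<rho> * dl q (x ! j) (y ! j))))\<bar> \<le> real w * \<rho> ^ Suc k'"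
proof -
  define m2 where "m2 = n - Suc i"
  have nsplit: "n = Suc i + m2" using i by (simp add: m2_def)
  define K1 where "K1 x y1 = esym (\<lambda>_. 1 / real q) (\<lambda>j. dl q (x ! j) (y1 ! j)) k' i * dl q (x ! i) (y1 ! i)"
    for x y1 :: "nat list"
  define K2 where "K2 x y2 = (\<Prod>j<m2. 1 / real q + \<rho> * dl q (x ! (Suc i + j)) (y2 ! j))" for x y2 :: "nat list"
  define ind1 where "ind1 v y1 = (if rob_run tr 0 s y1 = v then 1 else (0::real))" for v y1
  define acc where "acc v y2 = (if rob_run tr (Suc i) v y2 \<in> Acc then 1 else (0::real))" for v y2
  define G where "G v x = (\<Sum>y1\<in>cube q (Suc i). ind1 v y1 * K1 x y1)" for v x
  define H where "H v x = (\<Sum>y2\<in>cube q m2. acc v y2 * K2 x y2)" for v x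
  have finV: "finite (V (Suc i))" and cardV: "card (V (Suc i)) \<le> w"
    using robp i by (auto simp: is_robp_def)
  have supp: "set_pmf D \<subseteq> cube q n" using tw by (simp add: t_wise_uniform_def)
  have A: "(\<Sum>y\<in>cube q n. rob_eval s Acc tr y *
      (esym (\<lambda>_. 1 / real q) (\<lambda>j. \<rho> * dl q (x ! j) (y ! j)) k' i * (\<rho> * dl q (x ! i) (y ! i)) *
       (\<Prod>j\<in>{Suc i..<n}. 1 / real q + \<rho> * dl q (x ! j) (y ! j))))
     = \<rho> ^ Suc k' * (\<Sum>v\<in>V (Suc i). G v x * H v x)" for x
  proof -
    have pt: "rob_eval s Acc tr (y1 @ y2) *
      (esym (\<lambda>_. 1 / real q) (\<lambda>j. \<rho> * dl q (x ! j) ((y1 @ y2) ! j)) k' i * (\<rho> * dl q (x ! i) ((y1 @ y2) ! i)) *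
       (\<Prod>j\<in>{Suc i..<n}. 1 / real q + \<rho> * dl q (x ! j) ((y1 @ y2) ! j)))
      = (\<Sum>v\<in>V (Suc i). \<rho> ^ Suc k' * ((ind1 v y1 * K1 x y1) * (acc v y2 * K2 x y2)))"
      if y1: "y1 \<in> cube q (Suc i)" for y1 y2
    proof -
      have len: "length y1 = Suc i" using y1 by (simp add: cube_def)
      have e1: "esym (\<lambda>_. 1 / real q) (\<lambda>j. \<rho> * dl q (x ! j) ((y1 @ y2) ! j)) k' i
          = \<rho> ^ k' * esym (\<lambda>_. 1 / real q) (\<lambda>j. dl q (x ! j) (y1 ! j)) k' i"
      proof -
        have "esym (\<lambda>_. 1 / real q) (\<lambda>j. \<rho> * dl q (x ! j) ((y1 @ y2) ! j)) k' i
            = esym (\<lambda>_. 1 / real q) (\<lambda>j. \<rho> * dl q (x ! j) (y1 ! j)) k' i"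
          by (rule esym_cong) (auto simp: nth_append len)
        thus ?thesis by (simp add: esym_scale)
      qed
      have e2: "(y1 @ y2) ! i = y1 ! i" by (simp add: nth_append len)
      have e3: "(\<Prod>j\<in>{Suc i..<n}. 1 / real q + \<rho> * dl q (x ! j) ((y1 @ y2) ! j)) = K2 x y2"
      proof -
        have "(\<Prod>j\<in>{Suc i..<n}. 1 / real q + \<rho> * dl q (x ! j) ((y1 @ y2) ! j))
            = (\<Prod>j\<in>{0..<n - Suc i}. 1 / real q + \<rho> * dl q (x ! (Suc i + j)) ((y1 @ y2) ! (Suc i + j)))"
          by (subst prod.atLeastLessThan_shift_0) (simp add: comp_def)
        also have "\<dots> = K2 x y2"
          unfolding K2_def m2_def atLeast0LessThan by (rule prod.cong) (auto simp: nth_append len)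
        finally show ?thesis .
      qed
      have f: "rob_eval s Acc tr (y1 @ y2) = (\<Sum>v\<in>V (Suc i). ind1 v y1 * acc v y2)"
        unfolding ind1_def acc_def by (rule rob_split[OF robp y1]) (use i in simp)
      show ?thesis unfolding e1 e2 e3 f K1_def
        by (simp add: sum_distrib_right sum_distrib_left mult_ac)
    qed
    have "(\<Sum>y\<in>cube q n. rob_eval s Acc tr y *
      (esym (\<lambda>_. 1 / real q) (\<lambda>j. \<rho> * dl q (x ! j) (y ! j)) k' i * (\<rho> * dl q (x ! i) (y ! i)) *
       (\<Prod>j\<in>{Suc i..<n}. 1 / real q + \<rho> * dl q (x ! j) (y ! j))))
      = (\<Sum>y1\<in>cube q (Suc i). \<Sum>y2\<in>cube q m2. \<Sum>v\<in>V (Suc i). \<rho> ^ Suc k' * ((ind1 v y1 * K1 x y1) * (acc v y2 * K2 x y2)))"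
      unfolding nsplit[symmetric, THEN arg_cong[where f="cube q"], symmetric]
      apply (subst nsplit)
      apply (subst cube_split)
      apply (rule sum.cong[OF refl], rule sum.cong[OF refl])
      apply (subst nsplit[symmetric])+
      by (rule pt)
    also have "\<dots> = (\<Sum>v\<in>V (Suc i). \<Sum>y1\<in>cube q (Suc i). \<Sum>y2\<in>cube q m2. \<rho> ^ Suc k' * ((ind1 v y1 * K1 x y1) * (acc v y2 * K2 x y2)))"
      by (subst sum.swap, rule sum.cong[OF refl], subst sum.swap) (rule refl)
    also have "\<dots> = \<rho> ^ Suc k' * (\<Sum>v\<in>V (Suc i). G v x * H v x)"
      by (simp add: G_def H_def sum_distrib_left sum_product mult_ac)
    finally show ?thesis .
  qed
  have Hb: "0 \<le> H v x \<and> H v x \<le> 1" if x: "x \<in> cube q n" for v x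
  proof -
    have xq: "x ! (Suc i + j) < q" if "j < m2" for j
    proof -
      have "Suc i + j < length x" using that x nsplit by (simp add: cube_def)
      hence "x ! (Suc i + j) \<in> set x" by simp
      thus ?thesis using x by (auto simp: cube_def)
    qed
    have K2n: "0 \<le> K2 x y2" for y2
      unfolding K2_def by (intro prod_nonneg ballI factor_nonneg q \<rho>)
    have s1: "(\<Sum>y2\<in>cube q m2. K2 x y2) = 1"
      unfolding K2_def by (rule kern_sum[OF q]) (rule xq)
    have "0 \<le> H v x" unfolding H_def using K2n by (intro sum_nonneg) (simp add: acc_def)
    moreover have "H v x \<le> (\<Sum>y2\<in>cube q m2. K2 x y2)"
      unfolding H_def using K2n by (intro sum_mono) (simp add: acc_def)
    ultimately show ?thesis using s1 by simp
  qed
  have C: "\<bar>\<Sum>x\<in>cube q n. pmf D x * (G v x * H v x)\<bar> \<le> 1" for v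
  proof -
    have "\<bar>\<Sum>x\<in>cube q n. pmf D x * (G v x * H v x)\<bar> \<le> (\<Sum>x\<in>cube q n. \<bar>pmf D x * (G v x * H v x)\<bar>)"
      by (rule sum_abs)
    also have "\<dots> \<le> (\<Sum>x\<in>cube q n. pmf D x * ((1 + (G v x)^2) / 2))"
    proof (rule sum_mono)
      fix x assume x: "x \<in> cube q n"
      have "\<bar>G v x * H v x\<bar> \<le> \<bar>G v x\<bar>"
        using Hb[OF x, of v] by (simp add: abs_mult mult_left_le)
      also have "\<dots> \<le> (1 + (G v x)^2) / 2" by (rule abs_le_sq)
      finally have h: "\<bar>G v x * H v x\<bar> \<le> (1 + (G v x)^2) / 2" .
      have "\<bar>pmf D x * (G v x * H v x)\<bar> = pmf D x * \<bar>G v x * H v x\<bar>"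
        by (simp only: abs_mult abs_of_nonneg[OF pmf_nonneg])
      also have "\<dots> \<le> pmf D x * ((1 + (G v x)^2) / 2)"
        by (rule mult_left_mono[OF h pmf_nonneg])
      finally show "\<bar>pmf D x * (G v x * H v x)\<bar> \<le> pmf D x * ((1 + (G v x)^2) / 2)" .
    qed
    also have "\<dots> = ((\<Sum>x\<in>cube q n. pmf D x) + (\<Sum>x\<in>cube q n. pmf D x * (G v x)^2)) / 2"
      by (simp add: sum_divide_distrib[symmetric] sum.distrib[symmetric] distrib_left)
    also have "(\<Sum>x\<in>cube q n. pmf D x) = 1" by (rule sum_pmf_eq_1[OF finite_cube supp])
    also have "(\<Sum>x\<in>cube q n. pmf D x * (G v x)^2) \<le> 1"
      unfolding G_def K1_def
      by (rule G_bound[OF q tw i]) (simp add: ind1_def)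
    finally show ?thesis by simp
  qed
  have "\<bar>\<Sum>x\<in>cube q n. pmf D x * (\<Sum>y\<in>cube q n. rob_eval s Acc tr y *
      (esym (\<lambda>_. 1 / real q) (\<lambda>j. \<rho> * dl q (x ! j) (y ! j)) k' i * (\<rho> * dl q (x ! i) (y ! i)) *
       (\<Prod>j\<in>{Suc i..<n}. 1 / real q + \<rho> * dl q (x ! j) (y ! j))))\<bar>
     = \<bar>\<rho> ^ Suc k' * (\<Sum>v\<in>V (Suc i). \<Sum>x\<in>cube q n. pmf D x * (G v x * H v x))\<bar>"
  proof -
    have "(\<Sum>x\<in>cube q n. pmf D x * (\<rho> ^ Suc k' * (\<Sum>v\<in>V (Suc i). G v x * H v x)))
        = \<rho> ^ Suc k' * (\<Sum>x\<in>cube q n. \<Sum>v\<in>V (Suc i). pmf D x * (G v x * H v x))"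
      by (simp add: sum_distrib_left mult_ac)
    also have "\<dots> = \<rho> ^ Suc k' * (\<Sum>v\<in>V (Suc i). \<Sum>x\<in>cube q n. pmf D x * (G v x * H v x))"
      by (subst sum.swap) (rule refl)
    finally show ?thesis by (simp only: A)
  qed
  also have "\<dots> \<le> \<rho> ^ Suc k' * (\<Sum>v\<in>V (Suc i). \<bar>\<Sum>x\<in>cube q n. pmf D x * (G v x * H v x)\<bar>)"
    using \<rho> by (simp add: abs_mult sum_abs mult_left_mono)
  also have "\<dots> \<le> \<rho> ^ Suc k' * (\<Sum>v\<in>V (Suc i). 1)"
    using \<rho> by (intro mult_left_mono sum_mono C) auto
  also have "\<dots> \<le> \<rho> ^ Suc k' * real w"
    using \<rho> cardV by (intro mult_left_mono) auto
  finally show ?thesis by (simp add: mult_ac)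
qed



lemma sum1_swap:
  fixes p :: "'x \<Rightarrow> real"
  shows "(\<Sum>x\<in>X. p x * (\<Sum>a\<in>A. f a x)) = (\<Sum>a\<in>A. \<Sum>x\<in>X. p x * f a x)"
  by (simp add: sum_distrib_left sum.swap[of _ A])

lemma main_pos:
  assumes q: "q > 0" and tw: "t_wise_uniform q n (2 * Suc k') D"
    and \<eta>: "0 \<le> \<eta>" "\<eta> \<le> 1" and robp: "is_robp q n w V s Acc tr"
  shows "\<bar>measure_pmf.expectation D (noise_op q n \<eta> (rob_eval s Acc tr))
           - (\<Sum>x\<in>cube q n. rob_eval s Acc tr x) / real q ^ n\<bar>
         \<le> real n * real w * (1 - \<eta>) ^ Suc k'"
proof -
  define \<rho> where "\<rho> = 1 - \<eta>"
  have \<rho>: "0 \<le> \<rho>" "\<rho> \<le> 1" using \<eta> by (auto simp: \<rho>_def)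
  define f where "f = rob_eval s Acc tr"
  define a where "a = (\<lambda>_::nat. 1 / real q)"
  define b where "b x y j = \<rho> * dl q (x ! j) (y ! j)" for x y :: "nat list" and j
  define Z where "Z i x y = esym a (b x y) k' i * b x y i * (\<Prod>j\<in>{Suc i..<n}. a j + b x y j)" for i x y
  define T1 where "T1 l = (\<Sum>x\<in>cube q n. pmf D x * (\<Sum>y\<in>cube q n. f y * esym a (b x y) (Suc l) n))" for l
  define T2 where "T2 i = (\<Sum>x\<in>cube q n. pmf D x * (\<Sum>y\<in>cube q n. f y * Z i x y))" for i
  have supp: "set_pmf D \<subseteq> cube q n" using tw by (simp add: t_wise_uniform_def)
  have sc_exp: "sc_prob q \<eta> x y = (1 / real q) ^ n + (\<Sum>l<k'. esym a (b x y) (Suc l) n) + (\<Sum>i<n. Z i x y)"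
    if x: "x \<in> cube q n" for x y
  proof -
    have "sc_prob q \<eta> x y = (\<Prod>j<n. a j + b x y j)"
      using sc_prob_dl[of x n q \<eta> y] x q by (simp add: cube_def a_def b_def \<rho>_def)
    also have "\<dots> = (\<Sum>l<Suc k'. esym a (b x y) l n) + (\<Sum>i<n. Z i x y)"
      unfolding Z_def by (rule esym_tail)
    also have "(\<Sum>l<Suc k'. esym a (b x y) l n) = (1 / real q) ^ n + (\<Sum>l<k'. esym a (b x y) (Suc l) n)"
      by (subst sum.lessThan_Suc_shift) (simp add: esym_0 a_def)
    finally show ?thesis .
  qed
  have "measure_pmf.expectation D (noise_op q n \<eta> f)
      = (\<Sum>x\<in>cube q n. pmf D x * noise_op q n \<eta> f x)"
    by (rule expectation_cube[OF supp])
  also have "\<dots> = (\<Sum>x\<in>cube q n. pmf D x * ((\<Sum>y\<in>cube q n. f y) * (1 / real q) ^ n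
        + (\<Sum>l<k'. \<Sum>y\<in>cube q n. f y * esym a (b x y) (Suc l) n) + (\<Sum>i<n. \<Sum>y\<in>cube q n. f y * Z i x y)))"
  proof (rule sum.cong[OF refl])
    fix x assume x: "x \<in> cube q n"
    have "noise_op q n \<eta> f x = (\<Sum>y\<in>cube q n. f y * (1 / real q) ^ n
        + (\<Sum>l<k'. f y * esym a (b x y) (Suc l) n) + (\<Sum>i<n. f y * Z i x y))"
      unfolding noise_op_def
      by (rule sum.cong[OF refl]) (simp add: sc_exp[OF x] algebra_simps sum_distrib_left)
    also have "\<dots> = (\<Sum>y\<in>cube q n. f y) * (1 / real q) ^ n
        + (\<Sum>l<k'. \<Sum>y\<in>cube q n. f y * esym a (b x y) (Suc l) n) + (\<Sum>i<n. \<Sum>y\<in>cube q n. f y * Z i x y)"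
      by (simp add: sum.distrib sum_distrib_right sum.swap[of _ "cube q n"])
    finally show "pmf D x * noise_op q n \<eta> f x = pmf D x * ((\<Sum>y\<in>cube q n. f y) * (1 / real q) ^ n
        + (\<Sum>l<k'. \<Sum>y\<in>cube q n. f y * esym a (b x y) (Suc l) n) + (\<Sum>i<n. \<Sum>y\<in>cube q n. f y * Z i x y))"
      by simp
  qed
  also have "\<dots> = (\<Sum>y\<in>cube q n. f y) * (1 / real q) ^ n * (\<Sum>x\<in>cube q n. pmf D x)
      + (\<Sum>l<k'. T1 l) + (\<Sum>i<n. T2 i)"
    unfolding T1_def T2_def distrib_left sum.distrib sum1_swap
    by (simp add: sum_distrib_left sum_distrib_right mult_ac, rule sum.swap)
  also have "(\<Sum>x\<in>cube q n. pmf D x) = 1" by (rule sum_pmf_eq_1[OF finite_cube supp])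
  also have "(\<Sum>l<k'. T1 l) = 0"
  proof (rule sum.neutral, rule ballI)
    fix l assume "l \<in> {..<k'}"
    thus "T1 l = 0" unfolding T1_def a_def b_def
      by (intro term1_zero[OF q tw]) auto
  qed
  finally have E: "measure_pmf.expectation D (noise_op q n \<eta> f)
      - (\<Sum>x\<in>cube q n. f x) / real q ^ n = (\<Sum>i<n. T2 i)"
    by (simp add: power_one_over divide_inverse power_inverse)
  have "\<bar>\<Sum>i<n. T2 i\<bar> \<le> (\<Sum>i<n. \<bar>T2 i\<bar>)" by (rule sum_abs)
  also have "\<dots> \<le> (\<Sum>i<n. real w * \<rho> ^ Suc k')"
  proof (rule sum_mono)
    fix i assume "i \<in> {..<n}"
    hence i: "i < n" by simp
    show "\<bar>T2 i\<bar> \<le> real w * \<rho> ^ Suc k'"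
      unfolding T2_def Z_def a_def b_def f_def
      using term2[OF q tw \<rho> robp i] by (simp add: mult_ac)
  qed
  also have "\<dots> = real n * real w * (1 - \<eta>) ^ Suc k'" by (simp add: \<rho>_def)
  finally show ?thesis using E by (simp add: f_def)
qed



lemma noise_bounds:
  assumes q: "q > 0" and \<eta>: "0 \<le> \<eta>" "\<eta> \<le> 1" and x: "x \<in> cube q n"
    and f: "\<And>y. 0 \<le> f y \<and> f y \<le> 1"
  shows "0 \<le> noise_op q n \<eta> f x \<and> noise_op q n \<eta> f x \<le> 1"
proof -
  have len: "length x = n" using x by (simp add: cube_def)
  have xq: "x ! j < q" if "j < n" for j
  proof -
    have "x ! j \<in> set x" using that len by simp
    thus ?thesis using x by (auto simp: cube_def)
  qed
  have sc: "sc_prob q \<eta> x y = (\<Prod>j<n. 1 / real q + (1 - \<eta>) * dl q (x ! j) (y ! j))" for y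
    by (rule sc_prob_dl[OF len q])
  have scn: "0 \<le> sc_prob q \<eta> x y" for y
    unfolding sc by (intro prod_nonneg ballI factor_nonneg q) (use \<eta> in auto)
  have s1: "(\<Sum>y\<in>cube q n. sc_prob q \<eta> x y) = 1"
    unfolding sc by (rule kern_sum[OF q xq])
  have "0 \<le> noise_op q n \<eta> f x" unfolding noise_op_def
    using scn f by (intro sum_nonneg) auto
  moreover have "noise_op q n \<eta> f x \<le> (\<Sum>y\<in>cube q n. sc_prob q \<eta> x y)" unfolding noise_op_def
    using scn f by (intro sum_mono) (simp add: mult_left_le)
  ultimately show ?thesis using s1 by simp
qed

theorem theorem4p2:
  fixes q n k w :: nat and \<eta> :: real and D :: "nat list pmf"
    and V :: "nat \<Rightarrow> 'v set" and s :: 'v and Acc :: "'v set"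
    and tr :: "nat \<Rightarrow> 'v \<Rightarrow> nat \<Rightarrow> 'v"
  assumes "q \<ge> 2"
    and "t_wise_uniform q n (2 * k) D"
    and "0 \<le> \<eta>" and "\<eta> \<le> 1"
    and "is_robp q n w V s Acc tr"
  shows "\<bar>measure_pmf.expectation D (noise_op q n \<eta> (rob_eval s Acc tr))
           - (\<Sum>x\<in>cube q n. rob_eval s Acc tr x) / real q ^ n\<bar>
         \<le> real n * real w * (1 - \<eta>) ^ k"
proof -
  have q: "q > 0" using assms(1) by simp
  note tw = assms(2) and \<eta> = assms(3,4) and robp = assms(5)
  show ?thesis
  proof (cases k)
    case (Suc k')
    show ?thesis using main_pos[OF q tw[unfolded Suc] \<eta> robp] Suc by simp
  next
    case 0
    show ?thesis
    proof (cases "n = 0")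
      case True
      have tw': "t_wise_uniform q n (2 * Suc 0) D"
        using tw True 0 by (auto simp: t_wise_uniform_def)
      show ?thesis using main_pos[OF q tw' \<eta> robp] True by simp
    next
      case False
      have supp: "set_pmf D \<subseteq> cube q n" using tw by (simp add: t_wise_uniform_def)
      define f where "f = rob_eval s Acc tr"
      have f01: "0 \<le> f y \<and> f y \<le> 1" for y by (simp add: f_def rob_eval_def)
      have w1: "1 \<le> w"
      proof -
        have "finite (V 0)" "card (V 0) \<le> w" "s \<in> V 0" using robp by (auto simp: is_robp_def)
        hence "0 < card (V 0)" by (auto simp: card_gt_0_iff)
        thus ?thesis using \<open>card (V 0) \<le> w\<close> by simp
      qed
      have E: "0 \<le> measure_pmf.expectation D (noise_op q n \<eta> f) \<and> measure_pmf.expectation D (noise_op q n \<eta> f) \<le> 1"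
      proof -
        have e: "measure_pmf.expectation D (noise_op q n \<eta> f) = (\<Sum>x\<in>cube q n. pmf D x * noise_op q n \<eta> f x)"
          by (rule expectation_cube[OF supp])
        have nb: "\<And>x. x \<in> cube q n \<Longrightarrow> 0 \<le> noise_op q n \<eta> f x \<and> noise_op q n \<eta> f x \<le> 1"
          using noise_bounds[OF q \<eta>, of _ n f] f01 by blast
        have "0 \<le> (\<Sum>x\<in>cube q n. pmf D x * noise_op q n \<eta> f x)"
          using nb by (intro sum_nonneg) auto
        moreover have "(\<Sum>x\<in>cube q n. pmf D x * noise_op q n \<eta> f x) \<le> (\<Sum>x\<in>cube q n. pmf D x)"
          using nb by (intro sum_mono) (simp add: mult_left_le)
        ultimately show ?thesis using e sum_pmf_eq_1[OF finite_cube supp] by simp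
      qed
      have A: "0 \<le> (\<Sum>x\<in>cube q n. f x) / real q ^ n \<and> (\<Sum>x\<in>cube q n. f x) / real q ^ n \<le> 1"
      proof -
        have "0 \<le> (\<Sum>x\<in>cube q n. f x)" using f01 by (intro sum_nonneg) auto
        moreover have "(\<Sum>x\<in>cube q n. f x) \<le> (\<Sum>x\<in>cube q n. 1)" using f01 by (intro sum_mono) auto
        moreover have "(\<Sum>x\<in>cube q n. (1::real)) = real q ^ n" using card_cube[of q n] by simp
        moreover have "0 < real q ^ n" using q by simp
        ultimately show ?thesis by (simp add: divide_le_eq_1)
      qed
      have "\<bar>measure_pmf.expectation D (noise_op q n \<eta> f) - (\<Sum>x\<in>cube q n. f x) / real q ^ n\<bar> \<le> 1"
        using E A by linarith
      also have "1 \<le> real n * real w" using False w1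
        by (metis Suc_leI less_one mult_le_mono not_less of_nat_1 of_nat_le_iff of_nat_mult mult_1 neq0_conv)
      finally show ?thesis using 0 by (simp add: f_def)
    qed
  qed
qed


end
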